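(* Let $\xi,\eta\in\mathbb{R}$ and, for $x>0$, set $$K(x)=\frac{\ln x-9 \ln(1+x)+8 \ln(2+x)}{24}-\frac{18+33 x+14 x^2}{48 (1+x)^2 (2+x)},$$ $$M(x)=\psi(x)-\frac{28 x^4+87 x^3+73 x^2+3 x-12}{6 x (x+1)^3 (x+2)}-\frac{43\ln (x+1)-37\ln(x+2)}{6}.$$ Then the double inequality $\xi K(x)<M(x)<\eta K(x)$ holds for all $x\in(0,\infty)$ if and only if $\xi\ge4$ and $\eta\le0$.
   Context: $\Gamma$ is Euler's gamma function and $\psi=\Gamma'/\Gamma$ is the digamma function; $\ln$ is the natural logarithm. *)

theory Defs
  imports "HOL-Analysis.Analysis"
begin

definition K_fun :: "real \<Rightarrow> real" where
  "K_fun x = (ln x - 9 * ln (1 + x) + 8 * ln (2 + x)) / 24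
             - (18 + 33 * x + 14 * x^2) / (48 * (1 + x)^2 * (2 + x))"

definition M_fun :: "real \<Rightarrow> real" where
  "M_fun x = Digamma x
             - (28 * x^4 + 87 * x^3 + 73 * x^2 + 3 * x - 12) / (6 * x * (x + 1)^3 * (x + 2))
             - (43 * ln (x + 1) - 37 * ln (x + 2)) / 6"

end

theory Submission
  imports Defs "HOL-Real_Asymp.Real_Asymp"
begin


definition ip :: "real \<Rightarrow> nat \<Rightarrow> real \<Rightarrow> real" where "ip a k x = inverse (x+a) ^ k"
definition lnp :: "real \<Rightarrow> real \<Rightarrow> real" where "lnp a x = ln (x+a)"

lemma ip_deriv: assumes "x + a \<noteq> 0" shows "(ip a k has_real_derivative (- real k * ip a (k+1) x)) (at x)"
proof -
  have d: "((\<lambda>x. inverse (x+a) ^ k) has_real_derivative (real k * inverse(x+a)^(k-1) * (- (inverse(x+a) * inverse(x+a))))) (at x)"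
    using assms by (auto intro!: derivative_eq_intros)
  have "real k * inverse(x+a)^(k-1) * (- (inverse(x+a) * inverse(x+a))) = - real k * inverse(x+a)^(k+1)"
    by (cases k) (simp_all add: algebra_simps)
  from DERIV_cong[OF d this] show ?thesis unfolding ip_def[abs_def] .
qed

lemma ip_deriv'[derivative_intros]: "x + a \<noteq> 0 \<Longrightarrow> D = - real k * ip a (k+1) x \<Longrightarrow> ((\<lambda>x. ip a k x) has_real_derivative D) (at x)"
  using ip_deriv by simp

lemma lnp_deriv'[derivative_intros]: "x + a > 0 \<Longrightarrow> D = ip a 1 x \<Longrightarrow> ((\<lambda>x. lnp a x) has_real_derivative D) (at x)"
  unfolding lnp_def ip_def by (auto intro!: derivative_eq_intros simp: field_simps)

lemma pows: "(x::real) > 0 \<Longrightarrow> 0<x^1 \<and> 0<x^2 \<and> 0<x^3 \<and> 0<x^4 \<and> 0<x^5 \<and> 0<x^6 \<and> 0<x^7 \<and> 0<x^8 \<and> 0<x^9 \<and> 0<x^10"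
  by simp

lemma neg_lemma:
  fixes f f' :: "real \<Rightarrow> real"
  assumes der: "\<And>x. x>0 \<Longrightarrow> (f has_real_derivative f' x) (at x)"
    and pos: "\<And>x. x>0 \<Longrightarrow> f' x > 0"
    and lim: "(f \<longlongrightarrow> 0) at_top" and x: "x > 0"
  shows "f x < 0"
proof -
  have inc: "f a < f b" if "0 < a" "a < b" for a b
  proof (rule DERIV_pos_imp_increasing[OF that(2)])
    fix t assume "a \<le> t" "t \<le> b"
    then have "t > 0" using that by simp
    then show "\<exists>y. DERIV f t :> y \<and> y > 0" using der pos by blast
  qed
  have "f (x+1) \<le> 0"
  proof (rule tendsto_lowerbound[OF lim])
    show "\<forall>\<^sub>F i in at_top. f (x + 1) \<le> f i"
      using eventually_ge_at_top[of "x+1"]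
    proof eventually_elim
      case (elim y) then show ?case using inc[of "x+1" y] x by (cases "y = x+1") auto
    qed
  qed simp
  then show ?thesis using inc[of x "x+1"] x by simp
qed

definition R2 :: "real \<Rightarrow> real" where
 "R2 x = (-1)*ip 0 1 x + 7/2*ip 1 1 x - ip 1 2 x + 1/6*ip 1 3 x + 13/6*ip 2 1 x"

lemma R2_alg: "x*ix=(1::real) \<Longrightarrow> (x+1)*ia=1 \<Longrightarrow> (x+2)*ib=1 \<Longrightarrow>
  ((-1)*ix^1 + 7/2*ia^1 - ia^2 + 1/6*ia^3 + 13/6*ib^1) * (6 * x * (x + 1)^3 * (x + 2)) = 28 * x^4 + 87 * x^3 + 73 * x^2 + 3 * x - 12"
  by algebra

lemma R_eq: "x > 0 \<Longrightarrow> (28 * x^4 + 87 * x^3 + 73 * x^2 + 3 * x - 12) / (6 * x * (x + 1)^3 * (x + 2)) = R2 x"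
proof -
  assume x: "x > 0"
  have "R2 x * (6 * x * (x + 1)^3 * (x + 2)) = 28 * x^4 + 87 * x^3 + 73 * x^2 + 3 * x - 12"
    unfolding R2_def ip_def by (rule R2_alg) (use x in auto)
  then show ?thesis using x by (simp add: divide_eq_eq)
qed

definition Kf :: "real \<Rightarrow> real" where
 "Kf x = (lnp 0 x - 9*lnp 1 x + 8*lnp 2 x)/24 - 1/8*ip 1 1 x + 1/48*ip 1 2 x - 1/6*ip 2 1 x"

lemma KR_alg: "(x+1)*ia=(1::real) \<Longrightarrow> (x+2)*ib=1 \<Longrightarrow>
  (1/8*ia^1 - 1/48*ia^2 + 1/6*ib^1) * (48 * (1 + x)^2 * (2 + x)) = 18 + 33 * x + 14 * x^2"
  by algebra

lemma K_eq: "x > 0 \<Longrightarrow> K_fun x = Kf x"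
proof -
  assume x: "x > 0"
  have "(1/8*ip 1 1 x - 1/48*ip 1 2 x + 1/6*ip 2 1 x) * (48 * (1 + x)^2 * (2 + x)) = 18 + 33 * x + 14 * x^2"
    unfolding ip_def by (rule KR_alg) (use x in auto)
  then have "(18 + 33 * x + 14 * x^2) / (48 * (1 + x)^2 * (2 + x)) = 1/8*ip 1 1 x - 1/48*ip 1 2 x + 1/6*ip 2 1 x"
    using x by (simp add: divide_eq_eq)
  then show ?thesis unfolding K_fun_def Kf_def lnp_def by (simp add: add.commute)
qed

lemma M_eq: "x > 0 \<Longrightarrow> M_fun x = Digamma x - R2 x - (43 * lnp 1 x - 37 * lnp 2 x) / 6"
  unfolding M_fun_def lnp_def using R_eq by simp

definition Dfun :: "real \<Rightarrow> real" where
 "Dfun x = -9/2*ip 1 1 x + ip 1 2 x - 1/6*ip 1 3 x + 4/3*ip 2 1 x - ip 2 2 x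
   + 1/6*ip 2 3 x + 13/6*ip 3 1 x + (80*lnp 2 x - 43*lnp 1 x - 37*lnp 3 x)/6"

lemma M_step: "x > 0 \<Longrightarrow> M_fun x - M_fun (x+1) = Dfun x"
proof -
  assume x: "x > 0"
  have d: "Digamma (x+1) = Digamma x + inverse x" using Digamma_plus1[of x] x by (simp add: inverse_eq_divide)
  have e: "x + 1 + 1 = x + 2" "x + 1 + 2 = x + 3" "x + 1 + 0 = x + 1" "x + 0 = x" by simp_all
  have "M_fun x - M_fun (x+1) = (Digamma x - R2 x - (43 * lnp 1 x - 37 * lnp 2 x) / 6)
     - (Digamma (x+1) - R2 (x+1) - (43 * lnp 1 (x+1) - 37 * lnp 2 (x+1)) / 6)"
    using M_eq[OF x] M_eq[of "x+1"] x by simp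
  also have "\<dots> = Dfun x" unfolding d R2_def Dfun_def ip_def lnp_def e
    by (simp add: algebra_simps add_divide_distrib diff_divide_distrib)
  finally show ?thesis .
qed

definition Kdfun :: "real \<Rightarrow> real" where
 "Kdfun x = -1/8*ip 1 1 x + 1/48*ip 1 2 x - 1/24*ip 2 1 x - 1/48*ip 2 2 x + 1/6*ip 3 1 x
    + (lnp 0 x - 10*lnp 1 x + 17*lnp 2 x - 8*lnp 3 x)/24"

lemma K_step: "x > 0 \<Longrightarrow> Kf x - Kf (x+1) = Kdfun x"
proof -
  assume x: "x > 0"
  have e: "x + 1 + 1 = x + 2" "x + 1 + 2 = x + 3" "x + 1 + 0 = x + 1" "x + 0 = x" by simp_all
  show ?thesis unfolding Kf_def Kdfun_def ip_def lnp_def e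
    by (simp add: algebra_simps add_divide_distrib diff_divide_distrib)
qed



definition Dp :: "real \<Rightarrow> real" where
 "Dp x = (9/2)*ip 1 2 x - 2*ip 1 3 x + 1/2*ip 1 4 x - 4/3*ip 2 2 x + 2*ip 2 3 x
   - 1/2*ip 2 4 x - 13/6*ip 3 2 x - 43/6*ip 1 1 x + 40/3*ip 2 1 x - 37/6*ip 3 1 x"

definition Kdp :: "real \<Rightarrow> real" where
 "Kdp x = 1/8*ip 1 2 x - 1/24*ip 1 3 x + 1/24*ip 2 2 x + 1/24*ip 2 3 x - 1/6*ip 3 2 x
    + (ip 0 1 x - 10*ip 1 1 x + 17*ip 2 1 x - 8*ip 3 1 x)/24"

definition Kp :: "real \<Rightarrow> real" where
 "Kp x = (ip 0 1 x - 9*ip 1 1 x + 8*ip 2 1 x)/24 + 1/8*ip 1 2 x - 1/24*ip 1 3 x + 1/6*ip 2 2 x"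

definition Efun :: "real \<Rightarrow> real" where "Efun x = Dfun x - 4 * Kdfun x"
definition Ep :: "real \<Rightarrow> real" where "Ep x = Dp x - 4 * Kdp x"

lemma Dfun_deriv: "x > 0 \<Longrightarrow> (Dfun has_real_derivative Dp x) (at x)"
  unfolding Dfun_def[abs_def] Dp_def
  apply (rule derivative_eq_intros refl | simp)+
  apply (simp add: algebra_simps eval_nat_numeral add_divide_distrib diff_divide_distrib)
  done

lemma Kdfun_deriv: "x > 0 \<Longrightarrow> (Kdfun has_real_derivative Kdp x) (at x)"
  unfolding Kdfun_def[abs_def] Kdp_def
  apply (rule derivative_eq_intros refl | simp)+
  apply (simp add: algebra_simps eval_nat_numeral add_divide_distrib diff_divide_distrib)
  done

lemma Kf_deriv: "x > 0 \<Longrightarrow> (Kf has_real_derivative Kp x) (at x)"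
  unfolding Kf_def[abs_def] Kp_def
  apply (rule derivative_eq_intros refl | simp)+
  apply (simp add: algebra_simps eval_nat_numeral add_divide_distrib diff_divide_distrib)
  done

lemma Efun_deriv: "x > 0 \<Longrightarrow> (Efun has_real_derivative Ep x) (at x)"
  unfolding Efun_def[abs_def] Ep_def
  by (intro DERIV_diff DERIV_cmult Dfun_deriv Kdfun_deriv)

lemma Dfun_lim: "(Dfun \<longlongrightarrow> 0) at_top"
  unfolding Dfun_def ip_def lnp_def by real_asymp
lemma Kdfun_lim: "(Kdfun \<longlongrightarrow> 0) at_top"
  unfolding Kdfun_def ip_def lnp_def by real_asymp
lemma Kf_lim: "(Kf \<longlongrightarrow> 0) at_top"
  unfolding Kf_def ip_def lnp_def by real_asymp
lemma Efun_lim: "(Efun \<longlongrightarrow> 0) at_top"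
  unfolding Efun_def[abs_def] using tendsto_diff[OF Dfun_lim tendsto_mult[OF tendsto_const Kdfun_lim, of 4]] by simp

lemma Dp_alg: "x*ix=(1::real) \<Longrightarrow> (x+1)*ia=1 \<Longrightarrow> (x+2)*ib=1 \<Longrightarrow> (x+3)*ic=1 \<Longrightarrow>
  ((9/2)*ia^2 + (-2)*ia^3 + (1/2)*ia^4 + (-4/3)*ib^2 + 2*ib^3 + (-1/2)*ib^4 + (-13/6)*ic^2 + (-43/6)*ia^1 + (40/3)*ib^1 + (-37/6)*ic^1) * ((x+1)^4*(x+2)^4*(x+3)^2) = (77/6) + (127/3)*x^1 + (419/6)*x^2 + (172/3)*x^3 + (67/3)*x^4 + (10/3)*x^5"
  by algebra



lemma Ep_alg: "x*ix=(1::real) \<Longrightarrow> (x+1)*ia=1 \<Longrightarrow> (x+2)*ib=1 \<Longrightarrow> (x+3)*ic=1 \<Longrightarrow>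
  ((9/2)*ia^2 + (-2)*ia^3 + (1/2)*ia^4 + (-4/3)*ib^2 + 2*ib^3 + (-1/2)*ib^4 + (-13/6)*ic^2 + (-43/6)*ia^1 + (40/3)*ib^1 + (-37/6)*ic^1 + (-1/2)*ia^2 + (1/6)*ia^3 + (-1/6)*ib^2 + (-1/6)*ib^3 + (2/3)*ic^2 + (-1/6)*ix^1 + (5/3)*ia^1 + (-17/6)*ib^1 + (4/3)*ic^1) * (x^1*(x+1)^4*(x+2)^4*(x+3)^2) = (-24) + (-187/2)*x^1 + (-309/2)*x^2 + (-368/3)*x^3 + (-93/2)*x^4 + (-41/6)*x^5"
  by algebra



lemma Kp_alg: "x*ix=(1::real) \<Longrightarrow> (x+1)*ia=1 \<Longrightarrow> (x+2)*ib=1 \<Longrightarrow> (x+3)*ic=1 \<Longrightarrow>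
  ((1/24)*ix^1 + (-3/8)*ia^1 + (1/3)*ib^1 + (1/8)*ia^2 + (-1/24)*ia^3 + (1/6)*ib^2) * (x^1*(x+1)^3*(x+2)^2) = (1/6) + (1/3)*x^1 + (5/24)*x^2"
  by algebra



lemma B1_alg: "x*ix=(1::real) \<Longrightarrow> (x+1)*ia=1 \<Longrightarrow> (x+2)*ib=1 \<Longrightarrow> (x+3)*ic=1 \<Longrightarrow>
  ((9/2)*ia^2 + (-2)*ia^3 + (1/2)*ia^4 + (-4/3)*ib^2 + 2*ib^3 + (-1/2)*ib^4 + (-13/6)*ic^2 + (-43/6)*ia^1 + (40/3)*ib^1 + (-37/6)*ic^1 + (-1/2)*ia^2 + (1/6)*ia^3 + (-1/6)*ib^2 + (-1/6)*ib^3 + (2/3)*ic^2 + (-1/6)*ix^1 + (5/3)*ia^1 + (-17/6)*ib^1 + (4/3)*ic^1 + 10*ix^6) * (x^6*(x+1)^4*(x+2)^4*(x+3)^2) = 1440 + 9600*x^1 + 28240*x^2 + 48240*x^3 + 52970*x^4 + 39036*x^5 + (38993/2)*x^6 + (12891/2)*x^7 + (3922/3)*x^8 + (267/2)*x^9 + (19/6)*x^10"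
  by algebra



lemma B2_alg: "x*ix=(1::real) \<Longrightarrow> (x+1)*ia=1 \<Longrightarrow> (x+2)*ib=1 \<Longrightarrow> (x+3)*ic=1 \<Longrightarrow>
  ((1/24)*ix^1 + (-3/8)*ia^1 + (1/3)*ib^1 + (1/8)*ia^2 + (-1/24)*ia^3 + (1/6)*ib^2 + (-1/10)*ia^4) * (x^1*(x+1)^4*(x+2)^2) = (1/6) + (1/10)*x^1 + (17/120)*x^2 + (13/120)*x^3"
  by algebra




lemma Dp_pos: assumes x: "x > 0" shows "Dp x > 0"
proof -
  define ix where "ix = inverse x"
  define ia where "ia = inverse (x+1)"
  define ib where "ib = inverse (x+2)"
  define ic where "ic = inverse (x+3)"
  have h: "x*ix=1" "(x+1)*ia=1" "(x+2)*ib=1" "(x+3)*ic=1" using x unfolding ix_def ia_def ib_def ic_def by auto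
  have "Dp x = ((9/2)*ia^2 + (-2)*ia^3 + (1/2)*ia^4 + (-4/3)*ib^2 + 2*ib^3 + (-1/2)*ib^4 + (-13/6)*ic^2 + (-43/6)*ia^1 + (40/3)*ib^1 + (-37/6)*ic^1)"
    unfolding Dp_def ip_def ix_def ia_def ib_def ic_def by (simp add: algebra_simps add_divide_distrib diff_divide_distrib)
  with Dp_alg[OF h] have e: "(Dp x) * ((x+1)^4*(x+2)^4*(x+3)^2) = (77/6) + (127/3)*x^1 + (419/6)*x^2 + (172/3)*x^3 + (67/3)*x^4 + (10/3)*x^5" by simp
  have "0 < (77/6) + (127/3)*x^1 + (419/6)*x^2 + (172/3)*x^3 + (67/3)*x^4 + (10/3)*x^5" using pows[OF x] by linarith
  moreover have "0 < ((x+1)^4*(x+2)^4*(x+3)^2)" using x by simp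
  ultimately show ?thesis using e by (metis zero_less_mult_pos2)
qed

lemma Ep_neg: assumes x: "x > 0" shows "Ep x < 0"
proof -
  define ix where "ix = inverse x"
  define ia where "ia = inverse (x+1)"
  define ib where "ib = inverse (x+2)"
  define ic where "ic = inverse (x+3)"
  have h: "x*ix=1" "(x+1)*ia=1" "(x+2)*ib=1" "(x+3)*ic=1" using x unfolding ix_def ia_def ib_def ic_def by auto
  have "Ep x = ((9/2)*ia^2 + (-2)*ia^3 + (1/2)*ia^4 + (-4/3)*ib^2 + 2*ib^3 + (-1/2)*ib^4 + (-13/6)*ic^2 + (-43/6)*ia^1 + (40/3)*ib^1 + (-37/6)*ic^1 + (-1/2)*ia^2 + (1/6)*ia^3 + (-1/6)*ib^2 + (-1/6)*ib^3 + (2/3)*ic^2 + (-1/6)*ix^1 + (5/3)*ia^1 + (-17/6)*ib^1 + (4/3)*ic^1)"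
    unfolding Ep_def Dp_def Kdp_def ip_def ix_def ia_def ib_def ic_def by (simp add: algebra_simps add_divide_distrib diff_divide_distrib)
  with Ep_alg[OF h] have e: "(Ep x) * (x^1*(x+1)^4*(x+2)^4*(x+3)^2) = (-24) + (-187/2)*x^1 + (-309/2)*x^2 + (-368/3)*x^3 + (-93/2)*x^4 + (-41/6)*x^5" by simp
  have "(-24) + (-187/2)*x^1 + (-309/2)*x^2 + (-368/3)*x^3 + (-93/2)*x^4 + (-41/6)*x^5 < 0" using pows[OF x] by linarith
  moreover have "0 < (x^1*(x+1)^4*(x+2)^4*(x+3)^2)" using x by simp
  ultimately show ?thesis using e by (metis mult_less_0_iff not_less_iff_gr_or_eq)
qed

lemma Kp_pos: assumes x: "x > 0" shows "Kp x > 0"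
proof -
  define ix where "ix = inverse x"
  define ia where "ia = inverse (x+1)"
  define ib where "ib = inverse (x+2)"
  define ic where "ic = inverse (x+3)"
  have h: "x*ix=1" "(x+1)*ia=1" "(x+2)*ib=1" "(x+3)*ic=1" using x unfolding ix_def ia_def ib_def ic_def by auto
  have "Kp x = ((1/24)*ix^1 + (-3/8)*ia^1 + (1/3)*ib^1 + (1/8)*ia^2 + (-1/24)*ia^3 + (1/6)*ib^2)"
    unfolding Kp_def ip_def ix_def ia_def ib_def ic_def by (simp add: algebra_simps add_divide_distrib diff_divide_distrib)
  with Kp_alg[OF h] have e: "(Kp x) * (x^1*(x+1)^3*(x+2)^2) = (1/6) + (1/3)*x^1 + (5/24)*x^2" by simp
  have "0 < (1/6) + (1/3)*x^1 + (5/24)*x^2" using pows[OF x] by linarith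
  moreover have "0 < (x^1*(x+1)^3*(x+2)^2)" using x by simp
  ultimately show ?thesis using e by (metis zero_less_mult_pos2)
qed

lemma B1_pos: assumes x: "x > 0" shows "Ep x + 10*ip 0 6 x > 0"
proof -
  define ix where "ix = inverse x"
  define ia where "ia = inverse (x+1)"
  define ib where "ib = inverse (x+2)"
  define ic where "ic = inverse (x+3)"
  have h: "x*ix=1" "(x+1)*ia=1" "(x+2)*ib=1" "(x+3)*ic=1" using x unfolding ix_def ia_def ib_def ic_def by auto
  have "Ep x + 10*ip 0 6 x = ((9/2)*ia^2 + (-2)*ia^3 + (1/2)*ia^4 + (-4/3)*ib^2 + 2*ib^3 + (-1/2)*ib^4 + (-13/6)*ic^2 + (-43/6)*ia^1 + (40/3)*ib^1 + (-37/6)*ic^1 + (-1/2)*ia^2 + (1/6)*ia^3 + (-1/6)*ib^2 + (-1/6)*ib^3 + (2/3)*ic^2 + (-1/6)*ix^1 + (5/3)*ia^1 + (-17/6)*ib^1 + (4/3)*ic^1 + 10*ix^6)"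
    unfolding Ep_def Dp_def Kdp_def ip_def ix_def ia_def ib_def ic_def by (simp add: algebra_simps add_divide_distrib diff_divide_distrib)
  with B1_alg[OF h] have e: "(Ep x + 10*ip 0 6 x) * (x^6*(x+1)^4*(x+2)^4*(x+3)^2) = 1440 + 9600*x^1 + 28240*x^2 + 48240*x^3 + 52970*x^4 + 39036*x^5 + (38993/2)*x^6 + (12891/2)*x^7 + (3922/3)*x^8 + (267/2)*x^9 + (19/6)*x^10" by simp
  have "0 < 1440 + 9600*x^1 + 28240*x^2 + 48240*x^3 + 52970*x^4 + 39036*x^5 + (38993/2)*x^6 + (12891/2)*x^7 + (3922/3)*x^8 + (267/2)*x^9 + (19/6)*x^10" using pows[OF x] by linarith
  moreover have "0 < (x^6*(x+1)^4*(x+2)^4*(x+3)^2)" using x by simp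
  ultimately show ?thesis using e by (metis zero_less_mult_pos2)
qed

lemma B2_pos: assumes x: "x > 0" shows "Kp x - 1/10*ip 1 4 x > 0"
proof -
  define ix where "ix = inverse x"
  define ia where "ia = inverse (x+1)"
  define ib where "ib = inverse (x+2)"
  define ic where "ic = inverse (x+3)"
  have h: "x*ix=1" "(x+1)*ia=1" "(x+2)*ib=1" "(x+3)*ic=1" using x unfolding ix_def ia_def ib_def ic_def by auto
  have "Kp x - 1/10*ip 1 4 x = ((1/24)*ix^1 + (-3/8)*ia^1 + (1/3)*ib^1 + (1/8)*ia^2 + (-1/24)*ia^3 + (1/6)*ib^2 + (-1/10)*ia^4)"
    unfolding Kp_def ip_def ix_def ia_def ib_def ic_def by (simp add: algebra_simps add_divide_distrib diff_divide_distrib)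
  with B2_alg[OF h] have e: "(Kp x - 1/10*ip 1 4 x) * (x^1*(x+1)^4*(x+2)^2) = (1/6) + (1/10)*x^1 + (17/120)*x^2 + (13/120)*x^3" by simp
  have "0 < (1/6) + (1/10)*x^1 + (17/120)*x^2 + (13/120)*x^3" using pows[OF x] by linarith
  moreover have "0 < (x^1*(x+1)^4*(x+2)^2)" using x by simp
  ultimately show ?thesis using e by (metis zero_less_mult_pos2)
qed




lemma Dfun_neg: "x > 0 \<Longrightarrow> Dfun x < 0"
  by (rule neg_lemma[OF Dfun_deriv Dp_pos Dfun_lim])

lemma Kf_neg: "x > 0 \<Longrightarrow> Kf x < 0"
  by (rule neg_lemma[OF Kf_deriv Kp_pos Kf_lim])

lemma Efun_pos: assumes "x > 0" shows "Efun x > 0"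
proof -
  have "(\<lambda>x. - Efun x) x < 0"
  proof (rule neg_lemma[where f = "\<lambda>x. - Efun x" and f' = "\<lambda>x. - Ep x"])
    show "((\<lambda>x. - Efun x) has_real_derivative - Ep y) (at y)" if "y > 0" for y
      using Efun_deriv[OF that] by (rule DERIV_minus)
    show "- Ep y > 0" if "y > 0" for y using Ep_neg[OF that] by simp
    show "((\<lambda>x. - Efun x) \<longlongrightarrow> 0) at_top" using tendsto_minus[OF Efun_lim] by simp
  qed (use assms in auto)
  then show ?thesis by simp
qed

lemma Efun_upper: assumes "x > 0" shows "Efun x < 2 * ip 0 5 x"
proof -
  have "(\<lambda>y. Efun y - 2 * ip 0 5 y) x < 0"
  proof (rule neg_lemma[where f = "\<lambda>y. Efun y - 2 * ip 0 5 y" and f' = "\<lambda>y. Ep y + 10 * ip 0 6 y"])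
    show "((\<lambda>y. Efun y - 2 * ip 0 5 y) has_real_derivative Ep y + 10 * ip 0 6 y) (at y)" if "y > 0" for y
      using that by (auto intro!: derivative_eq_intros Efun_deriv)
    show "Ep y + 10 * ip 0 6 y > 0" if "y > 0" for y using B1_pos[OF that] by simp
    have "((\<lambda>y. 2 * ip 0 5 y) \<longlongrightarrow> 0) at_top" unfolding ip_def by real_asymp
    then show "((\<lambda>y. Efun y - 2 * ip 0 5 y) \<longlongrightarrow> 0) at_top"
      using tendsto_diff[OF Efun_lim] by fastforce
  qed (use assms in auto)
  then show ?thesis by simp
qed

lemma Kf_upper: assumes "x > 0" shows "Kf x < - (1/30) * ip 1 3 x"
proof -
  have "(\<lambda>y. Kf y + 1/30 * ip 1 3 y) x < 0"
  proof (rule neg_lemma[where f = "\<lambda>y. Kf y + 1/30 * ip 1 3 y" and f' = "\<lambda>y. Kp y - 1/10 * ip 1 4 y"])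
    show "((\<lambda>y. Kf y + 1/30 * ip 1 3 y) has_real_derivative Kp y - 1/10 * ip 1 4 y) (at y)" if "y > 0" for y
      using that by (auto intro!: derivative_eq_intros Kf_deriv)
    show "Kp y - 1/10 * ip 1 4 y > 0" if "y > 0" for y using B2_pos[OF that] by simp
    have "((\<lambda>y. 1/30 * ip 1 3 y) \<longlongrightarrow> 0) at_top" unfolding ip_def by real_asymp
    then show "((\<lambda>y. Kf y + 1/30 * ip 1 3 y) \<longlongrightarrow> 0) at_top"
      using tendsto_add[OF Kf_lim] by fastforce
  qed (use assms in auto)
  then show ?thesis by simp
qed



lemma Digamma_shift: "x > 0 \<Longrightarrow> Digamma (x + real n) = Digamma x + (\<Sum>k<n. inverse (x + real k))"
proof (induction n)
  case 0 then show ?case by simp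
next
  case (Suc n)
  have e: "x + real (Suc n) = (x + real n) + 1" by simp
  have "Digamma (x + real (Suc n)) = Digamma ((x + real n) + 1)" unfolding e ..
  also have "\<dots> = Digamma (x + real n) + 1 / (x + real n)"
    using Suc.prems by (intro Digamma_plus1) simp
  finally show ?case using Suc by (simp add: inverse_eq_divide)
qed

lemma shift_filterlim: "filterlim (\<lambda>n. x + real n) at_top sequentially"
  by (rule filterlim_tendsto_add_at_top[OF tendsto_const filterlim_real_sequentially])

lemma M_seq_lim: assumes x: "x > 0" shows "(\<lambda>n. M_fun (x + real n)) \<longlonglongrightarrow> 0"
proof -
  have L: "(\<lambda>m. ln (real m) - (\<Sum>k<m. inverse (x + real k))) \<longlonglongrightarrow> Digamma x"
    using Digamma_LIMSEQ[of x] x by simp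
  have A: "(\<lambda>n. Digamma (x + real n) - ln (real n)) \<longlonglongrightarrow> 0"
  proof -
    have "(\<lambda>n. Digamma x - (ln (real n) - (\<Sum>k<n. inverse (x + real k)))) \<longlonglongrightarrow> Digamma x - Digamma x"
      by (intro tendsto_intros L)
    moreover have "Digamma x - (ln (real n) - (\<Sum>k<n. inverse (x + real k))) = Digamma (x + real n) - ln (real n)" for n
      using Digamma_shift[OF x, of n] by simp
    ultimately show ?thesis by simp
  qed
  have B: "((\<lambda>y. ln y - R2 y - (43 * lnp 1 y - 37 * lnp 2 y) / 6) \<longlongrightarrow> 0) at_top"
    unfolding R2_def ip_def lnp_def by real_asymp
  have B': "(\<lambda>n. ln (x + real n) - R2 (x + real n) - (43 * lnp 1 (x + real n) - 37 * lnp 2 (x + real n)) / 6) \<longlonglongrightarrow> 0"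
    using filterlim_compose[OF B shift_filterlim] by simp
  have C: "(\<lambda>n. ln (x + real n) - ln (real n)) \<longlonglongrightarrow> 0"
    by real_asymp
  have "(\<lambda>n. (Digamma (x + real n) - ln (real n)) - (ln (x + real n) - ln (real n)) +
     (ln (x + real n) - R2 (x + real n) - (43 * lnp 1 (x + real n) - 37 * lnp 2 (x + real n)) / 6)) \<longlonglongrightarrow> 0 - 0 + 0"
    by (intro tendsto_intros A B' C)
  moreover have "M_fun (x + real n) = (Digamma (x + real n) - ln (real n)) - (ln (x + real n) - ln (real n)) +
     (ln (x + real n) - R2 (x + real n) - (43 * lnp 1 (x + real n) - 37 * lnp 2 (x + real n)) / 6)" for n
    using M_eq[of "x + real n"] x by simp
  ultimately show ?thesis by simp
qed

lemma M_tele: "x > 0 \<Longrightarrow> M_fun x = M_fun (x + real n) + (\<Sum>k<n. Dfun (x + real k))"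
proof (induction n)
  case 0 then show ?case by simp
next
  case (Suc n)
  have st: "M_fun (x + real n) - M_fun (x + real n + 1) = Dfun (x + real n)"
    using Suc.prems by (intro M_step) simp
  have e: "x + real (Suc n) = x + real n + 1" by simp
  show ?case using Suc.IH[OF Suc.prems] st unfolding e sum.lessThan_Suc by linarith
qed

lemma M_upper: assumes x: "x > 0" shows "M_fun x \<le> Dfun x"
proof -
  have "M_fun x - Dfun x \<le> M_fun (x + real (Suc n))" for n
  proof -
    have "(\<Sum>k<Suc n. Dfun (x + real k)) = Dfun x + (\<Sum>k<n. Dfun (x + real (Suc k)))"
      by (subst sum.lessThan_Suc_shift) simp
    moreover have "(\<Sum>k<n. Dfun (x + real (Suc k))) \<le> 0"
      using x by (intro sum_nonpos) (simp add: Dfun_neg less_imp_le)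
    ultimately show ?thesis using M_tele[OF x, of "Suc n"] by linarith
  qed
  then have "M_fun x - Dfun x \<le> 0"
    by (intro tendsto_lowerbound[OF LIMSEQ_Suc[OF M_seq_lim[OF x]]]) (auto intro: always_eventually)
  then show ?thesis by simp
qed

lemma M_neg: "x > 0 \<Longrightarrow> M_fun x < 0"
  using M_upper Dfun_neg by (meson le_less_trans)

definition Gf :: "real \<Rightarrow> real" where "Gf y = M_fun y - 4 * Kf y"

lemma G_step: "x > 0 \<Longrightarrow> Gf x - Gf (x+1) = Efun x"
  unfolding Gf_def Efun_def using M_step[of x] K_step[of x] by simp

lemma G_seq_lim: assumes x: "x > 0" shows "(\<lambda>n. Gf (x + real n)) \<longlonglongrightarrow> 0"
proof -
  have "(\<lambda>n. Kf (x + real n)) \<longlonglongrightarrow> 0"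
    using filterlim_compose[OF Kf_lim shift_filterlim] by simp
  then have "(\<lambda>n. M_fun (x + real n) - 4 * Kf (x + real n)) \<longlonglongrightarrow> 0 - 4 * 0"
    by (intro tendsto_intros M_seq_lim[OF x])
  then show ?thesis unfolding Gf_def by simp
qed

lemma G_tele: "x > 0 \<Longrightarrow> Gf x = Gf (x + real n) + (\<Sum>k<n. Efun (x + real k))"
proof (induction n)
  case 0 then show ?case by simp
next
  case (Suc n)
  have st: "Gf (x + real n) - Gf (x + real n + 1) = Efun (x + real n)"
    using Suc.prems by (intro G_step) simp
  have e: "x + real (Suc n) = x + real n + 1" by simp
  show ?case using Suc.IH[OF Suc.prems] st unfolding e sum.lessThan_Suc by linarith
qed

lemma G_lower: assumes x: "x > 0" shows "Gf x \<ge> Efun x"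
proof -
  have "Gf x - Efun x \<ge> Gf (x + real (Suc n))" for n
  proof -
    have "(\<Sum>k<Suc n. Efun (x + real k)) = Efun x + (\<Sum>k<n. Efun (x + real (Suc k)))"
      by (subst sum.lessThan_Suc_shift) simp
    moreover have "(\<Sum>k<n. Efun (x + real (Suc k))) \<ge> 0"
      using x by (intro sum_nonneg) (simp add: Efun_pos less_imp_le)
    ultimately show ?thesis using G_tele[OF x, of "Suc n"] by linarith
  qed
  then have "Gf x - Efun x \<ge> 0"
    by (intro tendsto_upperbound[OF LIMSEQ_Suc[OF G_seq_lim[OF x]]]) (auto intro: always_eventually)
  then show ?thesis by simp
qed

lemma inv5_alg: "y*iy = (1::real) \<Longrightarrow> (y-1)*iu = 1 \<Longrightarrow>
   (iu^4 - iy^4 - 4*iy^5) * (y^5 * (y-1)^4) = 10*y^3 - 20*y^2 + 15*y - 4"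
  by algebra

lemma inv5_step: assumes y: "y \<ge> (2::real)" shows "inverse y ^ 5 \<le> 1/4 * (inverse (y-1) ^ 4 - inverse y ^ 4)"
proof -
  have e: "(inverse (y-1) ^ 4 - inverse y ^ 4 - 4 * inverse y ^ 5) * (y^5 * (y-1)^4) = 10*y^3 - 20*y^2 + 15*y - 4"
    by (rule inv5_alg) (use y in auto)
  have "10*y^3 - 20*y^2 + 15*y - 4 = 10*y^2*(y-2) + 15*y - 4" by (simp add: algebra_simps power2_eq_square power3_eq_cube)
  also have "\<dots> > 0" using y by (smt (verit) mult_nonneg_nonneg zero_le_power2)
  finally have "(inverse (y-1) ^ 4 - inverse y ^ 4 - 4 * inverse y ^ 5) * (y^5 * (y-1)^4) > 0" using e by simp
  moreover have "y^5 * (y-1)^4 > 0" using y by simp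
  ultimately have "inverse (y-1) ^ 4 - inverse y ^ 4 - 4 * inverse y ^ 5 > 0"
    using zero_less_mult_pos2 by blast
  then show ?thesis by simp
qed

lemma sum_inv5: assumes x: "x \<ge> (2::real)"
  shows "(\<Sum>k<n. inverse (x + real k) ^ 5) \<le> 1/4 * inverse (x - 1) ^ 4 - 1/4 * inverse (x + real n - 1) ^ 4"
proof (induction n)
  case 0 then show ?case by simp
next
  case (Suc n)
  have "inverse (x + real n) ^ 5 \<le> 1/4 * (inverse (x + real n - 1) ^ 4 - inverse (x + real n) ^ 4)"
    using x by (intro inv5_step) simp
  then show ?case using Suc by (simp add: algebra_simps)
qed

lemma G_upper: assumes x: "x \<ge> 2" shows "Gf x \<le> 1/2 * inverse (x - 1) ^ 4"
proof -
  have x0: "x > 0" using x by simp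
  have "Gf x - 1/2 * inverse (x - 1) ^ 4 \<le> Gf (x + real n)" for n
  proof -
    have "(\<Sum>k<n. Efun (x + real k)) \<le> (\<Sum>k<n. 2 * inverse (x + real k) ^ 5)"
    proof (rule sum_mono)
      fix k assume "k \<in> {..<n}"
      show "Efun (x + real k) \<le> 2 * inverse (x + real k) ^ 5"
        using Efun_upper[of "x + real k"] x0 unfolding ip_def by simp
    qed
    also have "\<dots> = 2 * (\<Sum>k<n. inverse (x + real k) ^ 5)" by (simp add: sum_distrib_left)
    also have "\<dots> \<le> 2 * (1/4 * inverse (x - 1) ^ 4 - 1/4 * inverse (x + real n - 1) ^ 4)"
      using sum_inv5[OF x, of n] by simp
    also have "\<dots> \<le> 1/2 * inverse (x - 1) ^ 4"
    proof -
      have "inverse (x + real n - 1) ^ 4 \<ge> 0" using x by simp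
      then show ?thesis by simp
    qed
    finally show ?thesis using G_tele[OF x0, of n] by linarith
  qed
  then have "Gf x - 1/2 * inverse (x - 1) ^ 4 \<le> 0"
    by (intro tendsto_lowerbound[OF G_seq_lim[OF x0]]) (auto intro: always_eventually)
  then show ?thesis by simp
qed



lemma inv_le1: "x \<ge> 0 \<Longrightarrow> inverse (x + 1) \<le> (1::real)"
  by (simp add: inverse_le_1_iff)
lemma inv_le1': "x \<ge> 0 \<Longrightarrow> inverse (x + 2) \<le> (1::real)"
  by (simp add: inverse_le_1_iff)

lemma M_lower0: assumes x: "x > 0" "x \<le> 1" shows "M_fun x \<ge> - euler_mascheroni - 14"
proof -
  have dg: "Digamma (x+1) = Digamma x + inverse x" using Digamma_plus1[of x] x by (simp add: inverse_eq_divide)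
  have dg1: "Digamma (1::real) \<le> Digamma (x+1)" using x by (intro Digamma_real_mono) auto
  define a where "a = inverse (x+1)"
  define b where "b = inverse (x+2)"
  have a: "0 < a" "a \<le> 1" using x inv_le1[of x] unfolding a_def by auto
  have b: "0 < b" "b \<le> 1" using x inv_le1'[of x] unfolding b_def by auto
  have a3: "a^3 \<le> 1" using a by (simp add: power_le_one)
  have a2: "a^2 \<ge> 0" by simp
  have l1: "lnp 1 x \<le> 1" unfolding lnp_def using ln_le_minus_one[of "x+1"] x by simp
  have l2: "lnp 2 x \<ge> 0" unfolding lnp_def using x by simp
  have "M_fun x = Digamma (x+1) - 7/2*a + a^2 - 1/6*a^3 - 13/6*b - 43/6 * lnp 1 x + 37/6 * lnp 2 x"
    unfolding M_eq[OF x(1)] R2_def ip_def a_def b_def dg by (simp add: diff_divide_distrib)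
  moreover have "- euler_mascheroni \<le> Digamma (x+1)" using dg1 by simp
  ultimately show ?thesis using a b a3 a2 l1 l2 by linarith
qed

lemma K_upper0: assumes x: "x > 0" "x \<le> 1" shows "Kf x \<le> ln x / 24 + 1"
proof -
  define a where "a = inverse (x+1)"
  define b where "b = inverse (x+2)"
  have a: "0 < a" "a \<le> 1" using x inv_le1[of x] unfolding a_def by auto
  have b: "0 < b" using x unfolding b_def by auto
  have a2: "a^2 \<le> 1" using a by (simp add: power_le_one)
  have l1: "lnp 1 x \<ge> 0" unfolding lnp_def using x by simp
  have l2: "lnp 2 x \<le> 2" unfolding lnp_def using ln_le_minus_one[of "x+2"] x by simp
  have "Kf x = ln x/24 - 9/24*lnp 1 x + 8/24*lnp 2 x - 1/8*a + 1/48*a^2 - 1/6*b"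
    unfolding Kf_def ip_def a_def b_def by (simp add: lnp_def add_divide_distrib diff_divide_distrib)
  then show ?thesis using a b a2 l1 l2 by linarith
qed

theorem mainTheorem8:
  fixes \<xi> \<eta> :: real
  shows "(\<forall>x::real. x > 0 \<longrightarrow> \<xi> * K_fun x < M_fun x \<and> M_fun x < \<eta> * K_fun x)
         \<longleftrightarrow> (\<xi> \<ge> 4 \<and> \<eta> \<le> 0)"
proof
  assume H: "\<forall>x::real. x > 0 \<longrightarrow> \<xi> * K_fun x < M_fun x \<and> M_fun x < \<eta> * K_fun x"
  show "\<xi> \<ge> 4 \<and> \<eta> \<le> 0"
  proof
    show "\<xi> \<ge> 4"
    proof (rule ccontr)
      assume "\<not> \<xi> \<ge> 4"
      then have t: "4 - \<xi> > 0" by simp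
      define x where "x = 3 + 240/(4-\<xi>)"
      have q: "240/(4-\<xi>) > 0" using t by simp
      have x3: "x \<ge> 3" unfolding x_def using q by simp
      have s: "x + 1 \<ge> 240/(4-\<xi>)" unfolding x_def by simp
      have G: "Gf x \<le> 1/2 * inverse (x-1)^4" using x3 by (intro G_upper) simp
      have Kb: "Kf x < -(1/30) * inverse (x+1)^3" using Kf_upper[of x] x3 unfolding ip_def by simp
      have i1: "inverse (x-1) \<le> 2 * inverse (x+1)"
      proof -
        have "inverse (x-1) \<le> inverse ((x+1)/2)" using x3 by (intro le_imp_inverse_le) auto
        then show ?thesis by (simp add: inverse_eq_divide)
      qed
      have i2: "inverse (x-1)^4 \<le> 16 * inverse (x+1)^4"
      proof -
        have "inverse (x-1)^4 \<le> (2 * inverse (x+1))^4" using x3 by (intro power_mono i1) simp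
        then show ?thesis by (simp add: power_mult_distrib)
      qed
      have i3: "inverse (x+1) \<le> (4-\<xi>)/240"
      proof -
        have "inverse (x+1) \<le> inverse (240/(4-\<xi>))" using q s by (intro le_imp_inverse_le) auto
        then show ?thesis by simp
      qed
      have p3: "inverse (x+1)^3 \<ge> 0" using x3 by simp
      have "inverse (x+1)^4 = inverse (x+1)^3 * inverse (x+1)" by (simp add: eval_nat_numeral)
      then have "1/2 * inverse (x-1)^4 \<le> 8 * (inverse (x+1)^3 * inverse (x+1))"
        using i2 by linarith
      also have "\<dots> \<le> 8 * (inverse (x+1)^3 * ((4-\<xi>)/240))"
        using i3 p3 by (intro mult_left_mono) auto
      finally have i4: "1/2 * inverse (x-1)^4 \<le> (4-\<xi>)/30 * inverse (x+1)^3" by simp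
      have i5: "(4-\<xi>) * Kf x \<le> (4-\<xi>) * (-(1/30) * inverse (x+1)^3)"
        using Kb t by (intro mult_left_mono) auto
      have x0: "x > 0" using x3 by simp
      have "M_fun x - \<xi> * Kf x = Gf x + (4-\<xi>) * Kf x" unfolding Gf_def by (simp add: algebra_simps)
      also have "\<dots> \<le> 0" using G i4 i5 by simp
      finally have "M_fun x \<le> \<xi> * K_fun x" using K_eq[OF x0] by simp
      with H x0 show False by force
    qed
    show "\<eta> \<le> 0"
    proof (rule ccontr)
      assume "\<not> \<eta> \<le> 0"
      then have e: "\<eta> > 0" by simp
      define c where "c = 24 * (euler_mascheroni + 14 + \<eta>) / \<eta>"
      have c: "c > 0" unfolding c_def using e euler_mascheroni_pos by simp
      define x where "x = exp (- c)"
      have x0: "x > 0" unfolding x_def by simp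
      have x1: "x \<le> 1" unfolding x_def using c by simp
      have lx: "ln x = - c" unfolding x_def by simp
      have "\<eta> * Kf x \<le> \<eta> * (ln x / 24 + 1)" using K_upper0[OF x0 x1] e by (intro mult_left_mono) auto
      also have "\<dots> = - euler_mascheroni - 14" unfolding lx c_def using e by (simp add: field_simps)
      also have "\<dots> \<le> M_fun x" using M_lower0[OF x0 x1] .
      finally have "\<eta> * K_fun x \<le> M_fun x" using K_eq[OF x0] by simp
      with H x0 show False by force
    qed
  qed
next
  assume A: "\<xi> \<ge> 4 \<and> \<eta> \<le> 0"
  show "\<forall>x::real. x > 0 \<longrightarrow> \<xi> * K_fun x < M_fun x \<and> M_fun x < \<eta> * K_fun x"
  proof (intro allI impI conjI)
    fix x :: real assume x: "x > 0"
    have K: "K_fun x = Kf x" "Kf x < 0" using K_eq[OF x] Kf_neg[OF x] by auto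
    have "Gf x > 0" using G_lower[OF x] Efun_pos[OF x] by simp
    then have m: "M_fun x > 4 * Kf x" unfolding Gf_def by simp
    have "\<xi> * Kf x \<le> 4 * Kf x" using A K by (intro mult_right_mono_neg) auto
    then show "\<xi> * K_fun x < M_fun x" using m K unfolding K(1) by linarith
    have "\<eta> * Kf x \<ge> 0" using A K by (intro mult_nonpos_nonpos) auto
    then show "M_fun x < \<eta> * K_fun x" using M_neg[OF x] K unfolding K(1) by linarith
  qed
qed


end
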